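(* Let $S$ be the vertex set of an acute $0/1$-simplex in $[0,1]^n$ with $k\leq n$ vertices, and let $m\geq1$. Regard $[0,1]^n$ as the facet of $[0,1]^{n+m}$ consisting of points whose last $m$ coordinates vanish, so that $S$ is also the vertex set of an acute $0/1$-simplex in $[0,1]^{n+m}$. Then $$\mathcal{C}^{n+m}(S)=\left\{\begin{bmatrix}v\\ w\end{bmatrix}: v\in\mathcal{C}^n(S),\ w\in\{0,1\}^m\right\},\qquad \mathcal{A}^{n+m}(S)\supseteq\left\{\begin{bmatrix}v\\ w\end{bmatrix}: v\in\mathcal{A}^n(S),\ w\in\{0,1\}^m\right\}.$$ Moreover, for each $v\in\mathcal{C}^n(S)$ there exists an integer $\ell$ such that, for $w\in\{0,1\}^m$ (with $m$ large enough), $w^\top w\geq\ell$ if and only if $\begin{bmatrix}v\\ w\end{bmatrix}\in\mathcal{A}^{n+m}(S)$.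
   Context: A set of $j+1$ affinely independent points $a_0,\dots,a_j\in\{0,1\}^N$ is the vertex set of an acute $0/1$-$j$-simplex if all dihedral angles of their convex hull are acute; equivalently, with $P=[a_1-a_0,\dots,a_j-a_0]$ and $G=P^\top P$, every off-diagonal entry of $G^{-1}$ is negative and every row sum of $G^{-1}$ is positive. For the vertex set $S\subseteq\{0,1\}^N$ of an acute $0/1$-simplex: the set of acute extensions $\mathcal{A}^N(S)$ consists of all $v\in\{0,1\}^N$ such that $S\cup\{v\}$ is the vertex set of an acute $0/1$-simplex with one more vertex; the set of candidate acute extensions $\mathcal{C}^N(S)$ consists of all $v\in\{0,1\}^N$ whose orthogonal projection onto the affine hull of $S$ lies in the (relative) interior of the convex hull of $S$. *)

theory Defs
  imports Complex_Main
begin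

text \<open>Points of R^N are represented as functions nat => real that vanish at all
  coordinates i >= N.  In particular [0,1]^n sits inside [0,1]^(n+m) as the facet
  where the last m coordinates vanish, without any explicit embedding map.\<close>

definition cube01 :: "nat \<Rightarrow> (nat \<Rightarrow> real) set" where
  "cube01 N = {x. (\<forall>i<N. x i = 0 \<or> x i = 1) \<and> (\<forall>i\<ge>N. x i = 0)}"

definition ip :: "nat \<Rightarrow> (nat \<Rightarrow> real) \<Rightarrow> (nat \<Rightarrow> real) \<Rightarrow> real" where
  "ip N x y = (\<Sum>i<N. x i * y i)"

definition sqdist :: "nat \<Rightarrow> (nat \<Rightarrow> real) \<Rightarrow> (nat \<Rightarrow> real) \<Rightarrow> real" where
  "sqdist N x y = ip N (\<lambda>i. x i - y i) (\<lambda>i. x i - y i)"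

definition lincomb :: "((nat \<Rightarrow> real) \<Rightarrow> real) \<Rightarrow> (nat \<Rightarrow> real) set \<Rightarrow> nat \<Rightarrow> real" where
  "lincomb c S = (\<lambda>i. \<Sum>a\<in>S. c a * a i)"

definition aff_hull :: "(nat \<Rightarrow> real) set \<Rightarrow> (nat \<Rightarrow> real) set" where
  "aff_hull S = {x. \<exists>c. sum c S = 1 \<and> x = lincomb c S}"

definition conv_hull :: "(nat \<Rightarrow> real) set \<Rightarrow> (nat \<Rightarrow> real) set" where
  "conv_hull S = {x. \<exists>c. (\<forall>a\<in>S. c a \<ge> 0) \<and> sum c S = 1 \<and> x = lincomb c S}"

definition aff_indep :: "(nat \<Rightarrow> real) set \<Rightarrow> bool" where
  "aff_indep S \<longleftrightarrow> (\<forall>c. sum c S = 0 \<and> lincomb c S = (\<lambda>i. 0) \<longrightarrow> (\<forall>a\<in>S. c a = 0))"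

definition relint_conv :: "nat \<Rightarrow> (nat \<Rightarrow> real) set \<Rightarrow> (nat \<Rightarrow> real) set" where
  "relint_conv N S = {p \<in> conv_hull S. \<exists>e>0. \<forall>y\<in>aff_hull S. sqdist N y p < e \<longrightarrow> y \<in> conv_hull S}"

definition is_proj_aff :: "nat \<Rightarrow> (nat \<Rightarrow> real) set \<Rightarrow> (nat \<Rightarrow> real) \<Rightarrow> (nat \<Rightarrow> real) \<Rightarrow> bool" where
  "is_proj_aff N S v p \<longleftrightarrow> p \<in> aff_hull S \<and> (\<forall>y\<in>aff_hull S. sqdist N v p \<le> sqdist N v y)"

text \<open>Acute 0/1-simplex, via the Gram-matrix criterion: with a0 a vertex,
  P = [a_1 - a0, ..., a_j - a0], G = P^T P, the inverse H of G has negative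
  off-diagonal entries and positive row sums.\<close>
definition acute_simplex :: "nat \<Rightarrow> (nat \<Rightarrow> real) set \<Rightarrow> bool" where
  "acute_simplex N S \<longleftrightarrow> finite S \<and> S \<noteq> {} \<and> S \<subseteq> cube01 N \<and> aff_indep S \<and>
     (\<exists>a0\<in>S. \<exists>H :: (nat \<Rightarrow> real) \<Rightarrow> (nat \<Rightarrow> real) \<Rightarrow> real.
        let T = S - {a0};
            G = (\<lambda>x y. ip N (\<lambda>i. x i - a0 i) (\<lambda>i. y i - a0 i))
        in (\<forall>x\<in>T. \<forall>y\<in>T. (\<Sum>z\<in>T. G x z * H z y) = (if x = y then 1 else 0)) \<and>
           (\<forall>x\<in>T. \<forall>y\<in>T. (\<Sum>z\<in>T. H x z * G z y) = (if x = y then 1 else 0)) \<and>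
           (\<forall>x\<in>T. \<forall>y\<in>T. x \<noteq> y \<longrightarrow> H x y < 0) \<and>
           (\<forall>x\<in>T. (\<Sum>y\<in>T. H x y) > 0))"

definition acute_ext :: "nat \<Rightarrow> (nat \<Rightarrow> real) set \<Rightarrow> (nat \<Rightarrow> real) set" where
  "acute_ext N S = {v \<in> cube01 N. v \<notin> S \<and> acute_simplex N (insert v S)}"

definition cand_ext :: "nat \<Rightarrow> (nat \<Rightarrow> real) set \<Rightarrow> (nat \<Rightarrow> real) set" where
  "cand_ext N S = {v \<in> cube01 N. \<exists>p. is_proj_aff N S v p \<and> p \<in> relint_conv N S}"

definition stack :: "nat \<Rightarrow> (nat \<Rightarrow> real) \<Rightarrow> (nat \<Rightarrow> real) \<Rightarrow> nat \<Rightarrow> real" where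
  "stack n v w = (\<lambda>i. if i < n then v i else w (i - n))"

end

theory Submission
  imports Defs
begin


lemma ip_sym: "ip N x y = ip N y x" by (simp add: ip_def mult.commute)

lemma ip_diff2: "ip N x (\<lambda>i. y i - z i) = ip N x y - ip N x z"
  by (simp add: ip_def right_diff_distrib sum_subtractf)

lemma ip_add2: "ip N x (\<lambda>i. y i + z i) = ip N x y + ip N x z"
  by (simp add: ip_def distrib_left sum.distrib)

lemma ip_scale2: "ip N x (\<lambda>i. r * y i) = r * ip N x y"
  by (simp add: ip_def sum_distrib_left algebra_simps)

lemma ip_sum2: "ip N x (\<lambda>i. \<Sum>a\<in>A. f a i) = (\<Sum>a\<in>A. ip N x (f a))"
  by (simp add: ip_def sum_distrib_left sum.swap[of _ A])

lemma ip_diff1: "ip N (\<lambda>i. y i - z i) x = ip N y x - ip N z x"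
  by (metis ip_sym ip_diff2)
lemma ip_add1: "ip N (\<lambda>i. y i + z i) x = ip N y x + ip N z x"
  by (metis ip_sym ip_add2)
lemma ip_scale1: "ip N (\<lambda>i. r * y i) x = r * ip N y x"
  by (metis ip_sym ip_scale2)
lemma ip_sum1: "ip N (\<lambda>i. \<Sum>a\<in>A. f a i) x = (\<Sum>a\<in>A. ip N (f a) x)"
  by (simp add: ip_def sum_distrib_right sum.swap[of _ A])

lemma ip_lincomb2: "ip N x (lincomb c S) = (\<Sum>a\<in>S. c a * ip N x a)"
proof -
  have "ip N x (lincomb c S) = (\<Sum>a\<in>S. ip N x (\<lambda>i. c a * a i))"
    unfolding lincomb_def by (rule ip_sum2)
  then show ?thesis by (simp add: ip_scale2)
qed

lemma ip_nonneg: "ip N x x \<ge> 0"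
  by (simp add: ip_def sum_nonneg)

lemma ip_zero_iff: "ip N x x = 0 \<Longrightarrow> i < N \<Longrightarrow> x i = 0"
  unfolding ip_def by (subst (asm) sum_nonneg_eq_0_iff) auto

lemma ip_zero_left: assumes "ip N x x = 0" shows "ip N x y = 0"
proof -
  have "\<forall>i<N. x i = 0" using ip_zero_iff[OF assms] by blast
  then show ?thesis unfolding ip_def by (auto intro!: sum.neutral)
qed

lemma ip_dual:
  assumes "finite S" "x \<in> S"
    "\<forall>y\<in>S. \<forall>z\<in>S. ip N f (\<lambda>i. y i - z i) = (if x = y then 1 else 0) - (if x = z then 1 else 0)"
    "sum c S = 0"
  shows "ip N f (lincomb c S) = c x"
proof -
  have e: "ip N f a = ip N f x + (if x = a then 1 else 0) - 1" if "a \<in> S" for a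
    using assms(3)[rule_format, OF that assms(2)] by (simp add: ip_diff2 split: if_splits)
  have "ip N f (lincomb c S) = (\<Sum>a\<in>S. c a * (ip N f x - 1) + c a * (if x = a then 1 else 0))"
    unfolding ip_lincomb2 by (rule sum.cong) (auto simp: e algebra_simps)
  also have "\<dots> = (\<Sum>a\<in>S. c a * (ip N f x - 1)) + (\<Sum>a\<in>S. c a * (if x = a then 1 else 0))"
    by (rule sum.distrib)
  also have "(\<Sum>a\<in>S. c a * (ip N f x - 1)) = sum c S * (ip N f x - 1)"
    by (rule sum_distrib_right[symmetric])
  also have "(\<Sum>a\<in>S. c a * (if x = a then 1 else 0)) = (\<Sum>a\<in>S. if x = a then c a else 0)"
    by (rule sum.cong) auto
  also have "\<dots> = c x" using assms(1,2) by simp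
  finally show ?thesis using assms(4) by simp
qed

lemma lincomb_T:
  assumes "finite S" "a0 \<in> S" "sum c S = 0"
  shows "lincomb c S = (\<lambda>i. \<Sum>z\<in>S-{a0}. c z * (z i - a0 i))"
proof
  fix i
  have ca: "c a0 = - (\<Sum>z\<in>S-{a0}. c z)"
    using assms sum.remove[of S a0 c] by simp
  have "lincomb c S i = c a0 * a0 i + (\<Sum>z\<in>S-{a0}. c z * z i)"
    unfolding lincomb_def using assms sum.remove by fastforce
  also have "\<dots> = (\<Sum>z\<in>S-{a0}. c z * (z i - a0 i))"
    by (simp add: ca sum_distrib_right right_diff_distrib sum_subtractf)
  finally show "lincomb c S i = (\<Sum>z\<in>S-{a0}. c z * (z i - a0 i))" .
qed

definition insp :: "(nat \<Rightarrow> real) set \<Rightarrow> (nat \<Rightarrow> real) \<Rightarrow> bool" where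
  "insp S f \<longleftrightarrow> (\<exists>c. sum c S = 0 \<and> f = lincomb c S)"

lemma insp_diff: assumes "finite S" "y \<in> S" "z \<in> S" shows "insp S (\<lambda>i. y i - z i)"
  unfolding insp_def
proof (intro exI conjI)
  let ?c = "\<lambda>a. (if a = y then 1 else 0) - (if a = z then 1 else (0::real))"
  show "sum ?c S = 0" using assms by (simp add: sum_subtractf)
  show "(\<lambda>i. y i - z i) = lincomb ?c S"
  proof
    fix i
    have "lincomb ?c S i = (\<Sum>a\<in>S. (if a = y then a i else 0)) - (\<Sum>a\<in>S. (if a = z then a i else 0))"
      unfolding lincomb_def sum_subtractf[symmetric] by (rule sum.cong) auto
    then show "y i - z i = lincomb ?c S i" using assms by simp
  qed
qed

lemma insp_add: assumes "insp S f" "insp S h" shows "insp S (\<lambda>i. f i + h i)"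
proof -
  obtain c d where "sum c S = 0" "f = lincomb c S" "sum d S = 0" "h = lincomb d S"
    using assms unfolding insp_def by blast
  then show ?thesis unfolding insp_def lincomb_def
    by (intro exI[of _ "\<lambda>a. c a + d a"]) (simp add: sum.distrib distrib_right)
qed

lemma insp_scale: assumes "insp S f" shows "insp S (\<lambda>i. r * f i)"
proof -
  obtain c where "sum c S = 0" "f = lincomb c S"
    using assms unfolding insp_def by blast
  then show ?thesis unfolding insp_def lincomb_def
    by (intro exI[of _ "\<lambda>a. r * c a"]) (simp add: sum_distrib_left[symmetric] mult.assoc)
qed

lemma insp_zero: "insp S (\<lambda>i. 0)"
  unfolding insp_def lincomb_def by (auto intro!: exI[of _ "\<lambda>a. 0"])

lemma insp_sum: "finite A \<Longrightarrow> (\<And>a. a \<in> A \<Longrightarrow> insp S (f a)) \<Longrightarrow> insp S (\<lambda>i. \<Sum>a\<in>A. f a i)"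
proof (induction A rule: finite_induct)
  case empty then show ?case by (simp add: insp_zero)
next
  case (insert x F) then show ?case by (simp add: insp_add)
qed

lemma insp_insert: assumes "finite S" "u \<notin> S" "insp S f" shows "insp (insert u S) f"
proof -
  from assms(3) obtain c where c: "sum c S = 0" "f = lincomb c S" unfolding insp_def by blast
  let ?c = "c(u := 0)"
  have "sum ?c S = sum c S" using assms by (intro sum.cong) auto
  then have "sum ?c (insert u S) = sum c S" using assms by simp
  moreover have "lincomb ?c (insert u S) = lincomb c S"
    unfolding lincomb_def using assms by (auto intro!: sum.cong)
  ultimately show ?thesis unfolding insp_def using c by metis
qed

lemma lincomb_vanish: "S \<subseteq> cube01 n \<Longrightarrow> i \<ge> n \<Longrightarrow> lincomb c S i = 0"
  unfolding lincomb_def cube01_def by (auto intro!: sum.neutral)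

lemma insp_vanish: "insp S f \<Longrightarrow> S \<subseteq> cube01 n \<Longrightarrow> i \<ge> n \<Longrightarrow> f i = 0"
  unfolding insp_def using lincomb_vanish by blast



definition gfam :: "nat \<Rightarrow> (nat \<Rightarrow> real) set \<Rightarrow> ((nat \<Rightarrow> real) \<Rightarrow> nat \<Rightarrow> real) \<Rightarrow> bool" where
  "gfam N S g \<longleftrightarrow> (\<forall>x\<in>S. insp S (g x)) \<and>
     (\<forall>x\<in>S. \<forall>y\<in>S. \<forall>z\<in>S. ip N (g x) (\<lambda>i. y i - z i) = (if x = y then 1 else 0) - (if x = z then 1 else 0))"

definition obtuse :: "nat \<Rightarrow> (nat \<Rightarrow> real) set \<Rightarrow> ((nat \<Rightarrow> real) \<Rightarrow> nat \<Rightarrow> real) \<Rightarrow> bool" where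
  "obtuse N S g \<longleftrightarrow> (\<forall>x\<in>S. \<forall>y\<in>S. x \<noteq> y \<longrightarrow> ip N (g x) (g y) < 0)"

lemma gfam_lc: "gfam N S g \<Longrightarrow> x \<in> S \<Longrightarrow> \<exists>c. sum c S = 0 \<and> g x = lincomb c S"
  unfolding gfam_def insp_def by blast

lemma obtuseD: "obtuse N S g \<Longrightarrow> x \<in> S \<Longrightarrow> y \<in> S \<Longrightarrow> x \<noteq> y \<Longrightarrow> ip N (g x) (g y) < 0"
  unfolding obtuse_def by blast

lemma gfam_ip_coeff:
  assumes "finite S" "gfam N S g" "x \<in> S" "sum c S = 0"
  shows "ip N (g x) (lincomb c S) = c x"
  using assms ip_dual[of S x N "g x" c] unfolding gfam_def by blast

lemma gfam_ip_unique:
  assumes "finite S" "gfam N S g" "gfam N S h" "x \<in> S" "y \<in> S"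
  shows "ip N (h x) (h y) = ip N (g x) (g y)"
proof -
  obtain c where c: "sum c S = 0" "h y = lincomb c S" using assms(3,5) unfolding gfam_def insp_def by blast
  obtain d where d: "sum d S = 0" "g x = lincomb d S" using assms(2,4) unfolding gfam_def insp_def by blast
  have "ip N (h x) (h y) = c x" using gfam_ip_coeff[OF assms(1,3,4) c(1)] c(2) by simp
  also have "\<dots> = ip N (g x) (h y)" using gfam_ip_coeff[OF assms(1,2,4) c(1)] c(2) by simp
  also have "\<dots> = ip N (h y) (g x)" by (rule ip_sym)
  also have "\<dots> = d y" using gfam_ip_coeff[OF assms(1,3,5) d(1)] d(2) by simp
  also have "\<dots> = ip N (g y) (g x)" using gfam_ip_coeff[OF assms(1,2,5) d(1)] d(2) by simp
  also have "\<dots> = ip N (g x) (g y)" by (rule ip_sym)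
  finally show ?thesis .
qed

lemma acute_gfam:
  assumes "acute_simplex N S"
  shows "\<exists>g. gfam N S g \<and> obtuse N S g"
proof -
  from assms obtain a0 H where fin: "finite S" and a0: "a0 \<in> S"
    and HG: "\<forall>x\<in>S-{a0}. \<forall>y\<in>S-{a0}. (\<Sum>z\<in>S-{a0}. H x z * ip N (\<lambda>i. z i - a0 i) (\<lambda>i. y i - a0 i)) = (if x = y then 1 else 0)"
    and neg: "\<forall>x\<in>S-{a0}. \<forall>y\<in>S-{a0}. x \<noteq> y \<longrightarrow> H x y < 0"
    and rs: "\<forall>x\<in>S-{a0}. (\<Sum>y\<in>S-{a0}. H x y) > 0"
    unfolding acute_simplex_def Let_def by blast
  define T where "T = S - {a0}"
  have finT: "finite T" using fin T_def by simp
  define g0 where "g0 x = (\<lambda>i. \<Sum>z\<in>T. H x z * (z i - a0 i))" for x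
  define g where "g x = (if x = a0 then (\<lambda>i. - (\<Sum>y\<in>T. g0 y i)) else g0 x)" for x
  have g0_ip: "ip N (g0 x) Y = (\<Sum>z\<in>T. H x z * ip N (\<lambda>i. z i - a0 i) Y)" for x Y
    unfolding g0_def by (simp add: ip_sum1 ip_scale1)
  have F1: "ip N (g x) (\<lambda>i. y i - a0 i) = (if x = y then 1 else 0)" if "x \<in> T" "y \<in> S" for x y
  proof (cases "y = a0")
    case True
    then show ?thesis using that T_def by (simp add: g_def g0_ip ip_def)
  next
    case False
    then have "y \<in> T" using that T_def by simp
    then show ?thesis using that HG T_def by (simp add: g_def g0_ip)
  qed
  have F0: "ip N (g a0) (\<lambda>i. y i - a0 i) = (if a0 = y then 1 else 0) - 1" if "y \<in> S" for y
  proof -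
    have "ip N (g a0) (\<lambda>i. y i - a0 i) = - (\<Sum>x\<in>T. ip N (g x) (\<lambda>i. y i - a0 i))"
    proof -
      have "ip N (g a0) (\<lambda>i. y i - a0 i) = ip N (\<lambda>i. (-1) * (\<Sum>x\<in>T. g0 x i)) (\<lambda>i. y i - a0 i)"
        by (simp add: g_def)
      also have "\<dots> = - (\<Sum>x\<in>T. ip N (g0 x) (\<lambda>i. y i - a0 i))" 
        by (simp only: ip_scale1 ip_sum1) (simp?)
      also have "\<dots> = - (\<Sum>x\<in>T. ip N (g x) (\<lambda>i. y i - a0 i))"
        using T_def by (simp add: g_def)
      finally show ?thesis .
    qed
    also have "\<dots> = - (\<Sum>x\<in>T. if x = y then 1 else 0)"
      using F1 that by simp
    also have "\<dots> = (if a0 = y then 1 else 0) - 1"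
      using finT that T_def by auto
    finally show ?thesis .
  qed
  have F: "ip N (g x) (\<lambda>i. y i - a0 i) = (if x = y then 1 else 0) - (if x = a0 then 1 else 0)"
    if "x \<in> S" "y \<in> S" for x y
    using F1 F0 that T_def by (cases "x = a0") auto
  have dual: "ip N (g x) (\<lambda>i. y i - z i) = (if x = y then 1 else 0) - (if x = z then 1 else 0)"
    if "x \<in> S" "y \<in> S" "z \<in> S" for x y z
  proof -
    have "ip N (g x) (\<lambda>i. y i - z i) = ip N (g x) (\<lambda>i. (y i - a0 i) - (z i - a0 i))" by simp
    also have "\<dots> = ip N (g x) (\<lambda>i. y i - a0 i) - ip N (g x) (\<lambda>i. z i - a0 i)"
      by (rule ip_diff2)
    finally show ?thesis using F that by simp
  qed
  have insp0: "insp S (g0 x)" for x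
    unfolding g0_def using fin a0 T_def
    by (intro insp_sum finT insp_scale insp_diff) auto
  have inspg: "insp S (g x)" if "x \<in> S" for x
  proof (cases "x = a0")
    case True
    have "insp S (\<lambda>i. (-1) * (\<Sum>y\<in>T. g0 y i))"
      by (intro insp_scale insp_sum finT insp0)
    then show ?thesis using True by (simp add: g_def)
  qed (simp add: g_def insp0)
  have gf: "gfam N S g" unfolding gfam_def using dual inspg by blast
  have IPT: "ip N (g x) (g y) = (\<Sum>z\<in>T. H x z * ((if y = z then 1 else 0) - (if y = a0 then 1 else 0)))"
    if "x \<in> T" "y \<in> S" for x y
  proof -
    have "ip N (g x) (g y) = (\<Sum>z\<in>T. H x z * ip N (\<lambda>i. z i - a0 i) (g y))"
      using that T_def by (simp add: g_def g0_ip)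
    also have "\<dots> = (\<Sum>z\<in>T. H x z * ((if y = z then 1 else 0) - (if y = a0 then 1 else 0)))"
      using that T_def F by (intro sum.cong refl) (simp add: ip_sym[of N _ "g y"])
    finally show ?thesis .
  qed
  have ob1: "ip N (g x) (g y) < 0" if "x \<in> T" "y \<in> S" "x \<noteq> y" for x y
  proof (cases "y = a0")
    case True
    have "(\<Sum>z\<in>T. H x z * ((if y = z then 1 else 0) - (if y = a0 then 1 else 0))) = (\<Sum>z\<in>T. - H x z)"
      using True T_def by (intro sum.cong) auto
    then have "ip N (g x) (g y) = - (\<Sum>z\<in>T. H x z)"
      using IPT[OF that(1,2)] by (simp add: sum_negf)
    then show ?thesis using rs that T_def by simp
  next
    case False
    then have yT: "y \<in> T" using that T_def by simp
    have "ip N (g x) (g y) = (\<Sum>z\<in>T. if y = z then H x z else 0)"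
      using IPT[OF that(1,2)] False by (auto intro!: sum.cong)
    also have "\<dots> = H x y" using yT finT by simp
    finally show ?thesis using neg that yT T_def by simp
  qed
  have "obtuse N S g" unfolding obtuse_def
  proof (intro ballI impI)
    fix x y assume xy: "x \<in> S" "y \<in> S" "x \<noteq> y"
    show "ip N (g x) (g y) < 0"
    proof (cases "x = a0")
      case True
      then have "y \<in> T" using xy T_def by simp
      then show ?thesis using ob1[of y x] xy ip_sym[of N "g x" "g y"] by simp
    next
      case False
      then show ?thesis using ob1 xy T_def by simp
    qed
  qed
  then show ?thesis using gf by blast
qed



lemma gfam_acute:
  assumes fin: "finite S" and ne: "S \<noteq> {}" and sub: "S \<subseteq> cube01 N" and ai: "aff_indep S"
    and gf: "gfam N S g" and ob: "obtuse N S g"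
  shows "acute_simplex N S"
proof -
  obtain a0 where a0: "a0 \<in> S" using ne by blast
  define T where "T = S - {a0}"
  define H where "H x y = ip N (g x) (g y)" for x y
  define G where "G x y = ip N (\<lambda>i. x i - a0 i) (\<lambda>i. y i - a0 i)" for x y
  have Hsym: "H x y = H y x" for x y unfolding H_def by (rule ip_sym)
  have Gsym: "G x y = G y x" for x y unfolding G_def by (rule ip_sym)
  have E: "g y = (\<lambda>i. \<Sum>z\<in>T. H z y * (z i - a0 i))" if "y \<in> S" for y
  proof -
    obtain c where c: "sum c S = 0" "g y = lincomb c S" using gfam_lc[OF gf \<open>y \<in> S\<close>] by blast
    have cz: "c z = H z y" if "z \<in> S" for z
      using gfam_ip_coeff[OF fin gf that c(1)] c(2) unfolding H_def by simp
    have "g y = (\<lambda>i. \<Sum>z\<in>T. c z * (z i - a0 i))"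
      using lincomb_T[OF fin a0 c(1)] c(2) T_def by simp
    also have "\<dots> = (\<lambda>i. \<Sum>z\<in>T. H z y * (z i - a0 i))"
      using cz T_def by (intro ext sum.cong) auto
    finally show ?thesis .
  qed
  have GH: "(\<Sum>z\<in>T. G x z * H z y) = (if x = y then 1 else 0)" if "x \<in> T" "y \<in> T" for x y
  proof -
    have yS: "y \<in> S" using that T_def by simp
    have "ip N (\<lambda>i. x i - a0 i) (g y) = (\<Sum>z\<in>T. H z y * G x z)"
      unfolding E[OF yS] G_def by (simp add: ip_sum2 ip_scale2)
    moreover have "ip N (\<lambda>i. x i - a0 i) (g y) = (if x = y then 1 else 0)"
      using gf yS that a0 T_def unfolding gfam_def by (auto simp: ip_sym[of N _ "g y"])
    ultimately show ?thesis by (simp add: mult.commute)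
  qed
  have HG: "(\<Sum>z\<in>T. H x z * G z y) = (if x = y then 1 else 0)" if "x \<in> T" "y \<in> T" for x y
  proof -
    have "(\<Sum>z\<in>T. H x z * G z y) = (\<Sum>z\<in>T. G y z * H z x)"
      by (intro sum.cong refl) (simp add: Hsym Gsym mult.commute)
    then show ?thesis using GH[OF that(2,1)] by auto
  qed
  have neg: "H x y < 0" if "x \<in> T" "y \<in> T" "x \<noteq> y" for x y
    unfolding H_def using obtuseD[OF ob, of x y] that T_def by simp
  have rs: "(\<Sum>y\<in>T. H x y) > 0" if "x \<in> T" for x
  proof -
    have xS: "x \<in> S" and xa: "x \<noteq> a0" using that T_def by auto
    obtain c where c: "sum c S = 0" "g x = lincomb c S" using gfam_lc[OF gf xS] by blast
    have cz: "c z = H z x" if "z \<in> S" for z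
      using gfam_ip_coeff[OF fin gf that c(1)] c(2) unfolding H_def by simp
    have "c a0 = - (\<Sum>z\<in>T. c z)"
      using c(1) sum.remove[OF fin a0, of c] T_def by simp
    also have "\<dots> = - (\<Sum>y\<in>T. H x y)"
    proof -
      have "c z = H x z" if "z \<in> T" for z using cz[of z] Hsym[of z x] that T_def by simp
      then show ?thesis by (intro arg_cong[where f=uminus] sum.cong refl) simp
    qed
    finally have "H a0 x = - (\<Sum>y\<in>T. H x y)" using cz[OF a0] by simp
    moreover have "H a0 x < 0" unfolding H_def using obtuseD[OF ob a0 xS] xa by simp
    ultimately show ?thesis by simp
  qed
  show ?thesis
    unfolding acute_simplex_def Let_def
    by (intro conjI fin ne sub ai bexI[OF _ a0] exI[of _ H])
      (use GH HG neg rs in \<open>simp_all add: T_def G_def\<close>)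
qed



lemma orth_lc:
  assumes "finite S" "a0 \<in> S" "\<forall>a\<in>S. \<forall>b\<in>S. ip N d (\<lambda>i. a i - b i) = 0" "sum c S = 0"
  shows "ip N d (lincomb c S) = 0"
proof -
  have "ip N d (lincomb c S) = (\<Sum>z\<in>S-{a0}. c z * ip N d (\<lambda>i. z i - a0 i))"
    unfolding lincomb_T[OF assms(1,2,4)] by (simp add: ip_sum2 ip_scale2)
  also have "\<dots> = 0" using assms(2,3) by (intro sum.neutral) auto
  finally show ?thesis .
qed

lemma diff_p:
  assumes "finite S" "y \<in> S"
  shows "(\<lambda>i. y i - lincomb \<mu> S i) = lincomb (\<lambda>z. (if z = y then 1 else 0) - \<mu> z) S"
proof
  fix i
  have "lincomb (\<lambda>z. (if z = y then 1 else 0) - \<mu> z) S i = (\<Sum>z\<in>S. if z = y then z i else 0) - lincomb \<mu> S i"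
    unfolding lincomb_def sum_subtractf[symmetric] by (rule sum.cong) (auto simp: left_diff_distrib)
  then show "y i - lincomb \<mu> S i = lincomb (\<lambda>z. (if z = y then 1 else 0) - \<mu> z) S i"
    using assms by simp
qed

lemma diff_p_sum:
  fixes \<mu> :: "(nat \<Rightarrow> real) \<Rightarrow> real"
  assumes "finite S" "y \<in> S" "sum \<mu> S = 1"
  shows "sum (\<lambda>z. (if z = y then 1 else 0) - \<mu> z) S = 0"
proof -
  have "(\<Sum>z\<in>S. (if z = y then 1 else 0::real)) = 1" using assms by simp
  moreover have "(\<Sum>z\<in>S. (if z = y then 1 else 0) - \<mu> z) = (\<Sum>z\<in>S. (if z = y then 1 else 0)) - (\<Sum>z\<in>S. \<mu> z)"
    by (rule sum_subtractf)
  ultimately show ?thesis using assms by simp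
qed

lemma lincomb_insert:
  assumes "finite S" "u \<notin> S"
  shows "lincomb c (insert u S) = (\<lambda>i. c u * u i + lincomb c S i)"
  using assms unfolding lincomb_def by (simp add: sum.insert)

lemma constr:
  assumes fin: "finite S" and ne: "S \<noteq> {}" and sub: "S \<subseteq> cube01 N" and ai: "aff_indep S"
    and gf: "gfam N S g" and mu: "sum \<mu> S = 1" and p: "p = lincomb \<mu> S"
    and dd: "d = (\<lambda>i. u i - p i)"
    and orth: "\<forall>a\<in>S. \<forall>b\<in>S. ip N d (\<lambda>i. a i - b i) = 0"
    and s: "s = ip N d d" and spos: "s > 0"
    and g2: "g2 = (\<lambda>x. if x = u then (\<lambda>i. (1/s) * d i) else (\<lambda>i. g x i + (- \<mu> x / s) * d i))"
  shows "u \<notin> S" "aff_indep (insert u S)" "gfam N (insert u S) g2"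
    "\<forall>a\<in>S. ip N (g2 u) (g2 a) = - \<mu> a / s"
    "\<forall>a\<in>S. \<forall>b\<in>S. ip N (g2 a) (g2 b) = ip N (g a) (g b) + \<mu> a * \<mu> b / s"
proof -
  obtain a0 where a0: "a0 \<in> S" using ne by blast
  have o1: "ip N d (lincomb c S) = 0" if "sum c S = 0" for c
    using orth_lc[OF fin a0 orth that] .
  have o2: "ip N d (\<lambda>i. y i - p i) = 0" if "y \<in> S" for y
    using o1[OF diff_p_sum[OF fin that mu]] diff_p[OF fin that, of \<mu>] p by simp
  have o3: "ip N d (g a) = 0" if "a \<in> S" for a
    using gfam_lc[OF gf that] o1 by auto
  have du: "ip N (g a) d = 0" if "a \<in> S" for a using o3[OF that] ip_sym by metis
  have dg: "ip N (g a) (\<lambda>i. y i - p i) = (if a = y then 1 else 0) - \<mu> a" if "a \<in> S" "y \<in> S" for a y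
    using gfam_ip_coeff[OF fin gf that(1) diff_p_sum[OF fin that(2) mu]] diff_p[OF fin that(2), of \<mu>] p
    by simp
  have dud: "(\<lambda>i. u i - p i) = d" using dd by simp
  show uS: "u \<notin> S"
  proof
    assume "u \<in> S"
    then have "ip N d d = 0" using o2[of u] dud by simp
    then show False using s spos by simp
  qed
  have finS': "finite (insert u S)" using fin by simp
  show "aff_indep (insert u S)"
    unfolding aff_indep_def
  proof (intro allI impI)
    fix c assume c: "sum c (insert u S) = 0 \<and> lincomb c (insert u S) = (\<lambda>i. 0)"
    have ipz: "ip N d z = ip N d p" if "z \<in> S" for z
      using o2[OF that] by (simp add: ip_diff2)
    have ipu: "ip N d u = ip N d p + s"
      using s dud ip_diff2[of N d u p] by simp
    have "ip N d (lincomb c (insert u S)) = c u * ip N d u + (\<Sum>z\<in>S. c z * ip N d z)"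
      unfolding ip_lincomb2 using fin uS by simp
    also have "\<dots> = c u * (ip N d p + s) + (\<Sum>z\<in>S. c z) * ip N d p"
      using ipz ipu by (simp add: sum_distrib_right)
    also have "\<dots> = (c u + sum c S) * ip N d p + c u * s" by (simp add: algebra_simps)
    also have "c u + sum c S = 0" using c fin uS by simp
    finally have "c u * s = ip N d (lincomb c (insert u S))" by simp
    also have "\<dots> = 0" using c by (simp add: ip_def)
    finally have cu: "c u = 0" using spos by simp
    have "sum c S = 0" using c fin uS cu by simp
    moreover have "lincomb c S = (\<lambda>i. 0)"
      using c lincomb_insert[OF fin uS, of c] cu by (metis (no_types, lifting) add_0 mult_zero_left)
    ultimately have "\<forall>a\<in>S. c a = 0" using ai unfolding aff_indep_def by blast
    then show "\<forall>a\<in>insert u S. c a = 0" using cu by simp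
  qed
  have inspd: "insp (insert u S) d"
  proof -
    have "insp (insert u S) (\<lambda>i. u i - a0 i)" using finS' a0 by (intro insp_diff) auto
    moreover have "insp S (\<lambda>i. a0 i - p i)"
      unfolding insp_def using diff_p[OF fin a0, of \<mu>] diff_p_sum[OF fin a0 mu] p by blast
    then have "insp (insert u S) (\<lambda>i. a0 i - p i)" using insp_insert[OF fin uS] by blast
    ultimately have "insp (insert u S) (\<lambda>i. (u i - a0 i) + (a0 i - p i))" by (rule insp_add)
    then show ?thesis using dd by simp
  qed
  have insp2: "insp (insert u S) (g2 x)" if "x \<in> insert u S" for x
  proof (cases "x = u")
    case True then show ?thesis using g2 inspd insp_scale[of "insert u S" d "1/s"] by simp
  next
    case False
    then have xS: "x \<in> S" using that by simp
    have "insp (insert u S) (g x)" using gf xS insp_insert[OF fin uS] unfolding gfam_def by blast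
    then have "insp (insert u S) (\<lambda>i. g x i + (- \<mu> x / s) * d i)"
      using inspd by (intro insp_add insp_scale)
    then show ?thesis using False g2 by simp
  qed
  have F: "ip N (g2 x) (\<lambda>i. y i - p i) = (if x = y then 1 else 0) - (if x = u then 0 else \<mu> x)"
    if "x \<in> insert u S" "y \<in> insert u S" for x y
  proof (cases "x = u")
    case True
    then have "ip N (g2 x) (\<lambda>i. y i - p i) = (1/s) * ip N d (\<lambda>i. y i - p i)"
      using g2 ip_scale1[of N "1/s" d] by simp
    then show ?thesis using True that o2 dud s spos uS by auto
  next
    case False
    then have xS: "x \<in> S" using that by simp
    have "ip N (g2 x) (\<lambda>i. y i - p i) = ip N (g x) (\<lambda>i. y i - p i) + (- \<mu> x / s) * ip N d (\<lambda>i. y i - p i)"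
      using g2 False ip_add1[of N "g x" "\<lambda>i. (- \<mu> x / s) * d i"] ip_scale1[of N "- \<mu> x / s" d] by simp
    then show ?thesis using False that o2 dud s spos uS dg[OF xS] du[OF xS] by auto
  qed
  show "gfam N (insert u S) g2"
    unfolding gfam_def
  proof (intro conjI ballI)
    fix x assume "x \<in> insert u S" then show "insp (insert u S) (g2 x)" by (rule insp2)
  next
    fix x y z assume xyz: "x \<in> insert u S" "y \<in> insert u S" "z \<in> insert u S"
    have "ip N (g2 x) (\<lambda>i. y i - z i) = ip N (g2 x) (\<lambda>i. (y i - p i) - (z i - p i))" by simp
    also have "\<dots> = ip N (g2 x) (\<lambda>i. y i - p i) - ip N (g2 x) (\<lambda>i. z i - p i)" by (rule ip_diff2)
    finally show "ip N (g2 x) (\<lambda>i. y i - z i) = (if x = y then 1 else 0) - (if x = z then 1 else 0)"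
      using F[OF xyz(1,2)] F[OF xyz(1,3)] by simp
  qed
  show "\<forall>a\<in>S. ip N (g2 u) (g2 a) = - \<mu> a / s"
  proof
    fix a assume aS: "a \<in> S"
    have au: "a \<noteq> u" using aS uS by blast
    have "ip N (g2 u) (g2 a) = (1/s) * (ip N d (g a) + (- \<mu> a / s) * ip N d d)"
      using g2 au ip_scale1[of N "1/s" d] ip_add2[of N d "g a" "\<lambda>i. (- \<mu> a / s) * d i"] ip_scale2[of N d "- \<mu> a / s" d] by simp
    then show "ip N (g2 u) (g2 a) = - \<mu> a / s" using o3[OF aS] s spos by simp
  qed
  show "\<forall>a\<in>S. \<forall>b\<in>S. ip N (g2 a) (g2 b) = ip N (g a) (g b) + \<mu> a * \<mu> b / s"
  proof (intro ballI)
    fix a b assume ab: "a \<in> S" "b \<in> S"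
    have au: "a \<noteq> u" "b \<noteq> u" using ab uS by blast+
    define ca where "ca = - \<mu> a / s"
    define cb where "cb = - \<mu> b / s"
    have e1: "ip N (g2 a) (g2 b) = ip N (\<lambda>i. g a i + ca * d i) (\<lambda>i. g b i + cb * d i)"
      using g2 au unfolding ca_def cb_def by simp
    have e2: "ip N (\<lambda>i. g a i + ca * d i) (\<lambda>i. g b i + cb * d i) = ip N (g a) (\<lambda>i. g b i + cb * d i) + ca * ip N d (\<lambda>i. g b i + cb * d i)"
      by (simp only: ip_add1 ip_scale1)
    have e3: "ip N (g a) (\<lambda>i. g b i + cb * d i) = ip N (g a) (g b) + cb * ip N (g a) d"
      by (simp only: ip_add2 ip_scale2)
    have e4: "ip N d (\<lambda>i. g b i + cb * d i) = ip N d (g b) + cb * ip N d d"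
      by (simp only: ip_add2 ip_scale2)
    have "ip N (g2 a) (g2 b) = ip N (g a) (g b) + ca * cb * s"
      using e1 e2 e3 e4 o3[OF ab(2)] du[OF ab(1)] s by simp
    then show "ip N (g2 a) (g2 b) = ip N (g a) (g b) + \<mu> a * \<mu> b / s"
      unfolding ca_def cb_def using spos by (simp add: field_simps power2_eq_square)
  qed
qed



definition Qc :: "nat \<Rightarrow> (nat \<Rightarrow> real) set \<Rightarrow> ((nat \<Rightarrow> real) \<Rightarrow> nat \<Rightarrow> real) \<Rightarrow> ((nat \<Rightarrow> real) \<Rightarrow> real) \<Rightarrow> real \<Rightarrow> bool" where
  "Qc N S g \<mu> s \<longleftrightarrow> s > 0 \<and> (\<forall>a\<in>S. \<mu> a > 0) \<and>
     (\<forall>a\<in>S. \<forall>b\<in>S. a \<noteq> b \<longrightarrow> ip N (g a) (g b) + \<mu> a * \<mu> b / s < 0)"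

lemma core:
  assumes fin: "finite S" and ne: "S \<noteq> {}" and sub: "S \<subseteq> cube01 N" and ai: "aff_indep S"
    and gf: "gfam N S g" and mu: "sum \<mu> S = 1" and p: "p = lincomb \<mu> S"
    and u: "u \<in> cube01 N"
    and orth: "\<forall>a\<in>S. \<forall>b\<in>S. ip N (\<lambda>i. u i - p i) (\<lambda>i. a i - b i) = 0"
  shows "(u \<notin> S \<and> acute_simplex N (insert u S)) \<longleftrightarrow> Qc N S g \<mu> (ip N (\<lambda>i. u i - p i) (\<lambda>i. u i - p i))"
proof -
  define d where "d = (\<lambda>i. u i - p i)"
  define s where "s = ip N d d"
  have orth': "\<forall>a\<in>S. \<forall>b\<in>S. ip N d (\<lambda>i. a i - b i) = 0" using orth d_def by simp
  define g2 where "g2 = (\<lambda>x. if x = u then (\<lambda>i. (1/s) * d i) else (\<lambda>i. g x i + (- \<mu> x / s) * d i))"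
  note C = constr[OF fin ne sub ai gf mu p d_def orth' s_def _ g2_def]
  have "(u \<notin> S \<and> acute_simplex N (insert u S)) \<longleftrightarrow> Qc N S g \<mu> s"
  proof
    assume Q: "Qc N S g \<mu> s"
    then have spos: "s > 0" unfolding Qc_def by blast
    note C = C[OF spos]
    have ob: "obtuse N (insert u S) g2"
      unfolding obtuse_def
    proof (intro ballI impI)
      fix x y assume xy: "x \<in> insert u S" "y \<in> insert u S" "x \<noteq> y"
      show "ip N (g2 x) (g2 y) < 0"
      proof (cases "x = u")
        case True
        then have yS: "y \<in> S" using xy by auto
        then show ?thesis using C(4) True Q spos unfolding Qc_def by simp
      next
        case xu: False
        then have xS: "x \<in> S" using xy by auto
        show ?thesis
        proof (cases "y = u")
          case True
          then have "ip N (g2 x) (g2 y) = - \<mu> x / s" using C(4) xS ip_sym by metis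
          then show ?thesis using Q xS spos unfolding Qc_def by simp
        next
          case False
          then have yS: "y \<in> S" using xy by auto
          then show ?thesis using C(5) xS xy Q unfolding Qc_def by simp
        qed
      qed
    qed
    have "acute_simplex N (insert u S)"
      using C(2,3) ob fin sub u by (intro gfam_acute) auto
    then show "u \<notin> S \<and> acute_simplex N (insert u S)" using C(1) by blast
  next
    assume A: "u \<notin> S \<and> acute_simplex N (insert u S)"
    then have uS: "u \<notin> S" and ac: "acute_simplex N (insert u S)" by auto
    have aiS': "aff_indep (insert u S)" using ac unfolding acute_simplex_def by blast
    have spos: "s > 0"
    proof (rule ccontr)
      assume "\<not> s > 0"
      then have "s = 0" using ip_nonneg[of N d] s_def by simp
      then have dz: "d i = 0" if "i < N" for i using ip_zero_iff[of N d i] s_def that by simp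
      have pv: "p i = 0" if "i \<ge> N" for i using lincomb_vanish[OF sub that] p by simp
      have uv: "u i = 0" if "i \<ge> N" for i using u that unfolding cube01_def by simp
      have up: "u = p"
      proof
        fix i show "u i = p i" using dz[of i] pv[of i] uv[of i] d_def by (cases "i < N") auto
      qed
      define c where "c = (\<lambda>z. if z = u then 1 else - \<mu> z)"
      have "sum c S = (\<Sum>z\<in>S. - \<mu> z)" unfolding c_def using uS by (intro sum.cong) auto
      then have "sum c S = - 1" using mu by (simp add: sum_negf)
      then have "sum c (insert u S) = 0" using fin uS unfolding c_def by simp
      moreover have "lincomb c (insert u S) = (\<lambda>i. 0)"
      proof -
        have "lincomb c S = (\<lambda>i. - p i)" unfolding p lincomb_def c_def using uS
          by (auto simp: sum_negf[symmetric] intro!: sum.cong)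
        then show ?thesis using lincomb_insert[OF fin uS, of c] up unfolding c_def by simp
      qed
      ultimately have "c u = 0" using aiS' unfolding aff_indep_def by blast
      then show False unfolding c_def by simp
    qed
    note C = C[OF spos]
    obtain g' where g': "gfam N (insert u S) g'" "obtuse N (insert u S) g'" using acute_gfam[OF ac] by blast
    have finS': "finite (insert u S)" using fin by simp
    have neg: "ip N (g2 x) (g2 y) < 0" if "x \<in> insert u S" "y \<in> insert u S" "x \<noteq> y" for x y
      using gfam_ip_unique[OF finS' g'(1) C(3) that(1,2)] obtuseD[OF g'(2) that] by simp
    have "\<forall>a\<in>S. \<mu> a > 0"
    proof
      fix a assume aS: "a \<in> S"
      then have "- \<mu> a / s < 0" using neg[of u a] C(4) uS by auto
      then show "\<mu> a > 0" using spos by (simp add: zero_less_divide_iff)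
    qed
    moreover have "\<forall>a\<in>S. \<forall>b\<in>S. a \<noteq> b \<longrightarrow> ip N (g a) (g b) + \<mu> a * \<mu> b / s < 0"
    proof (intro ballI impI)
      fix a b assume ab: "a \<in> S" "b \<in> S" "a \<noteq> b"
      then show "ip N (g a) (g b) + \<mu> a * \<mu> b / s < 0"
        using neg[of a b] C(5) by simp
    qed
    ultimately show "Qc N S g \<mu> s" using spos unfolding Qc_def by blast
  qed
  then show ?thesis unfolding s_def d_def .
qed



lemma sum_split: "(\<Sum>i<n+m. f i) = (\<Sum>i<n. f i) + (\<Sum>i<m. f (n+i))" for f :: "nat \<Rightarrow> real"
  by (induct m) (auto simp: add.assoc)

lemma ip_lift:
  assumes "\<forall>i\<ge>n. x i = 0" "n \<le> N"
  shows "ip N x y = ip n x y"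
proof -
  obtain k where N: "N = n + k" using assms(2) le_Suc_ex by blast
  have "ip N x y = ip n x y + (\<Sum>i<k. x (n+i) * y (n+i))"
    unfolding ip_def N sum_split ..
  also have "(\<Sum>i<k. x (n+i) * y (n+i)) = 0" using assms(1) by simp
  finally show ?thesis by simp
qed

lemma ip_lift2:
  assumes "\<forall>i\<ge>n. y i = 0" "n \<le> N"
  shows "ip N x y = ip n x y"
  using ip_lift[OF assms, of x] ip_sym by metis

lemma ip_cong: "(\<forall>i<n. x i = x' i) \<Longrightarrow> (\<forall>i<n. y i = y' i) \<Longrightarrow> ip n x y = ip n x' y'"
  unfolding ip_def by (intro sum.cong) auto

lemma cube_mono: "n \<le> N \<Longrightarrow> cube01 n \<subseteq> cube01 N"
  unfolding cube01_def by (auto simp: not_less[symmetric])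

lemma gfam_lift:
  assumes "S \<subseteq> cube01 n" "n \<le> N" "gfam n S g"
  shows "gfam N S g"
proof -
  have "ip N (g x) y = ip n (g x) y" if "x \<in> S" for x y
  proof -
    have "insp S (g x)" using assms(3) that unfolding gfam_def by blast
    then have "\<forall>i\<ge>n. g x i = 0" using insp_vanish assms(1) by blast
    then show ?thesis using ip_lift assms(2) by blast
  qed
  then show ?thesis using assms(3) unfolding gfam_def by simp
qed

lemma stack_cube: "v \<in> cube01 n \<Longrightarrow> w \<in> cube01 m \<Longrightarrow> stack n v w \<in> cube01 (n+m)"
  unfolding cube01_def stack_def by auto

lemma cube_stack:
  assumes "x \<in> cube01 (n+m)"
  shows "\<exists>v w. x = stack n v w \<and> v \<in> cube01 n \<and> w \<in> cube01 m"
proof (intro exI conjI)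
  let ?v = "\<lambda>i. if i < n then x i else 0" and ?w = "\<lambda>i. if i < m then x (n + i) else 0"
  show "x = stack n ?v ?w"
  proof
    fix i show "x i = stack n ?v ?w i"
      using assms unfolding stack_def cube01_def by auto
  qed
  show "?v \<in> cube01 n" "?w \<in> cube01 m" using assms unfolding cube01_def by auto
qed

lemma stack_below: "i < n \<Longrightarrow> stack n v w i = v i" unfolding stack_def by simp

lemma ip_stack:
  assumes "\<forall>i\<ge>n. y i = 0" "\<forall>i\<ge>n. y' i = 0"
  shows "ip (n+m) (\<lambda>i. stack n v w i - y i) (\<lambda>i. stack n v w i - y' i)
       = ip n (\<lambda>i. v i - y i) (\<lambda>i. v i - y' i) + ip m w w"
proof -
  have "ip (n+m) (\<lambda>i. stack n v w i - y i) (\<lambda>i. stack n v w i - y' i)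
      = (\<Sum>i<n. (stack n v w i - y i) * (stack n v w i - y' i)) + (\<Sum>i<m. (stack n v w (n+i) - y (n+i)) * (stack n v w (n+i) - y' (n+i)))"
    unfolding ip_def sum_split ..
  also have "(\<Sum>i<n. (stack n v w i - y i) * (stack n v w i - y' i)) = ip n (\<lambda>i. v i - y i) (\<lambda>i. v i - y' i)"
    unfolding ip_def by (intro sum.cong) (auto simp: stack_def)
  also have "(\<Sum>i<m. (stack n v w (n+i) - y (n+i)) * (stack n v w (n+i) - y' (n+i))) = ip m w w"
    unfolding ip_def using assms by (intro sum.cong) (auto simp: stack_def)
  finally show ?thesis .
qed

lemma aff_vanish: "S \<subseteq> cube01 n \<Longrightarrow> y \<in> aff_hull S \<Longrightarrow> \<forall>i\<ge>n. y i = 0"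
  unfolding aff_hull_def using lincomb_vanish by blast

lemma conv_aff: "conv_hull S \<subseteq> aff_hull S"
  unfolding conv_hull_def aff_hull_def by blast

lemma sqdist_lift:
  assumes "\<forall>i\<ge>n. y i = 0" "\<forall>i\<ge>n. p i = 0" "n \<le> N"
  shows "sqdist N y p = sqdist n y p"
  unfolding sqdist_def using assms by (intro ip_lift) auto

lemma part1:
  assumes sub: "S \<subseteq> cube01 n"
  shows "cand_ext (n + m) S = {stack n v w | v w. v \<in> cand_ext n S \<and> w \<in> cube01 m}"
proof -
  have rel: "relint_conv (n+m) S = relint_conv n S"
  proof -
    have "sqdist (n+m) y p = sqdist n y p" if "y \<in> aff_hull S" "p \<in> conv_hull S" for y p
    proof -
      have "p \<in> aff_hull S" using that conv_aff by blast
      then show ?thesis using sqdist_lift[OF aff_vanish[OF sub that(1)] aff_vanish[OF sub], of p "n+m"] by simp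
    qed
    then show ?thesis unfolding relint_conv_def by auto
  qed
  have proj: "is_proj_aff (n+m) S (stack n v w) p \<longleftrightarrow> is_proj_aff n S v p" for v w p
  proof -
    have sd: "sqdist (n+m) (stack n v w) y = sqdist n v y + ip m w w" if "y \<in> aff_hull S" for y
      unfolding sqdist_def using ip_stack aff_vanish[OF sub that] by blast
    show ?thesis unfolding is_proj_aff_def using sd by auto
  qed
  show ?thesis
  proof (intro set_eqI iffI)
    fix x assume x: "x \<in> cand_ext (n+m) S"
    then obtain v w where vw: "x = stack n v w" "v \<in> cube01 n" "w \<in> cube01 m"
      using cube_stack unfolding cand_ext_def by blast
    then have "v \<in> cand_ext n S" using x proj rel unfolding cand_ext_def by auto
    then show "x \<in> {stack n v w | v w. v \<in> cand_ext n S \<and> w \<in> cube01 m}" using vw by blast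
  next
    fix x assume "x \<in> {stack n v w | v w. v \<in> cand_ext n S \<and> w \<in> cube01 m}"
    then obtain v w where vw: "x = stack n v w" "v \<in> cand_ext n S" "w \<in> cube01 m" by blast
    then show "x \<in> cand_ext (n+m) S"
      using proj rel stack_cube unfolding cand_ext_def by auto
  qed
qed



lemma lincomb_lin: "lincomb (\<lambda>z. \<mu> z + t * c z) S = (\<lambda>i. lincomb \<mu> S i + t * lincomb c S i)"
  unfolding lincomb_def by (simp add: distrib_right sum.distrib sum_distrib_left mult.assoc)

lemma lincomb_diff: "lincomb (\<lambda>z. c1 z - c2 z) S = (\<lambda>i. lincomb c1 S i - lincomb c2 S i)"
  unfolding lincomb_def by (simp add: left_diff_distrib sum_subtractf)

lemma ip_quad: "ip N (\<lambda>i. D i + r * E i) (\<lambda>i. D i + r * E i) = ip N D D + 2 * r * ip N D E + r^2 * ip N E E"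
proof -
  have "ip N (\<lambda>i. D i + r * E i) (\<lambda>i. D i + r * E i)
      = ip N D (\<lambda>i. D i + r * E i) + r * ip N E (\<lambda>i. D i + r * E i)"
    by (simp only: ip_add1 ip_scale1)
  also have "\<dots> = ip N D D + r * ip N D E + r * (ip N E D + r * ip N E E)"
    by (simp only: ip_add2 ip_scale2)
  finally show ?thesis using ip_sym[of N E D] by (simp add: algebra_simps power2_eq_square)
qed

lemma proj_orth:
  assumes pr: "is_proj_aff N S v p" and fin: "finite S" and ab: "a \<in> S" "b \<in> S"
  shows "ip N (\<lambda>i. v i - p i) (\<lambda>i. a i - b i) = 0"
proof -
  define D where "D = (\<lambda>i. v i - p i)"
  define E where "E = (\<lambda>i. a i - b i)"
  define X where "X = ip N D E"
  define Y where "Y = ip N E E"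
  define t where "t = X / (Y + 1)"
  have Y0: "Y \<ge> 0" unfolding Y_def by (rule ip_nonneg)
  obtain \<mu> where mu: "sum \<mu> S = 1" "p = lincomb \<mu> S" using pr unfolding is_proj_aff_def aff_hull_def by blast
  obtain c where c: "sum c S = 0" "E = lincomb c S" using insp_diff[OF fin ab] unfolding insp_def E_def by blast
  define y where "y = lincomb (\<lambda>z. \<mu> z + t * c z) S"
  have "sum (\<lambda>z. \<mu> z + t * c z) S = 1" using mu c by (simp add: sum.distrib sum_distrib_left[symmetric])
  then have ya: "y \<in> aff_hull S" unfolding aff_hull_def y_def by blast
  have yy: "(\<lambda>i. v i - y i) = (\<lambda>i. D i + (-t) * E i)"
    unfolding y_def lincomb_lin D_def using mu c by auto
  have "sqdist N v p \<le> sqdist N v y" using pr ya unfolding is_proj_aff_def by blast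
  then have "ip N D D \<le> ip N D D + 2 * (-t) * X + (-t)^2 * Y"
    unfolding sqdist_def yy ip_quad D_def[symmetric] X_def Y_def .
  then have h: "0 \<le> -2 * t * X + t^2 * Y" by simp
  have "(-2 * t * X + t^2 * Y) * (Y+1)^2 = - (X^2 * (Y + 2))"
  proof -
    have Y1: "Y + 1 \<noteq> 0" using Y0 by simp
    have tY: "t * (Y+1) = X" unfolding t_def using Y1 by simp
    have "(-2 * t * X + t^2 * Y) * (Y+1)^2 = -2*X*(t*(Y+1))*(Y+1) + (t*(Y+1))^2*Y"
      by (simp add: power2_eq_square algebra_simps)
    also have "\<dots> = -2*X*X*(Y+1) + X^2*Y" by (simp add: tY)
    also have "\<dots> = - (X^2 * (Y + 2))" by (simp add: power2_eq_square algebra_simps)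
    finally show ?thesis .
  qed
  moreover have "0 \<le> (-2 * t * X + t^2 * Y) * (Y+1)^2" using h by simp
  ultimately have "X^2 * (Y + 2) \<le> 0" by simp
  then have "X^2 \<le> 0" using Y0 by (simp add: mult_le_0_iff)
  then have "X = 0" by simp
  then show ?thesis unfolding X_def D_def E_def .
qed

lemma relint_pos:
  assumes fin: "finite S" and ai: "aff_indep S" and gf: "gfam N S g"
    and mu: "sum \<mu> S = 1" and p: "p = lincomb \<mu> S" and rel: "p \<in> relint_conv N S"
  shows "\<forall>a\<in>S. \<mu> a > 0"
proof (rule ccontr)
  assume "\<not> (\<forall>a\<in>S. \<mu> a > 0)"
  then obtain a where aS: "a \<in> S" and ma: "\<mu> a \<le> 0" by force
  obtain b where bS: "b \<in> S" and ba: "b \<noteq> a"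
  proof (cases "S = {a}")
    case True then have "\<mu> a = 1" using mu by simp
    then show ?thesis using ma by simp
  next
    case False then show ?thesis using that aS by blast
  qed
  have one: "ip N (g a) (\<lambda>i. a i - b i) = 1" using gf aS bS ba unfolding gfam_def by auto
  define q where "q = ip N (g a) (g a)"
  have "q \<noteq> 0" using ip_zero_left[of N "g a"] one q_def by auto
  then have qpos: "q > 0" using ip_nonneg[of N "g a"] q_def by simp
  obtain c where c: "sum c S = 0" "g a = lincomb c S" using gfam_lc[OF gf aS] by blast
  have ca: "c a = q" using gfam_ip_coeff[OF fin gf aS c(1)] c(2) q_def by simp
  obtain e where e: "e > 0" "\<forall>y\<in>aff_hull S. sqdist N y p < e \<longrightarrow> y \<in> conv_hull S"
    using rel unfolding relint_conv_def by blast
  define t where "t = e / (2 * (q + e))"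
  have tpos: "t > 0" unfolding t_def using e qpos by simp
  have tq: "t * q < e" unfolding t_def using e qpos by (simp add: field_simps add_pos_pos mult_pos_pos)
  have t1: "t < 1" unfolding t_def using e qpos by (simp add: field_simps)
  define cy where "cy = (\<lambda>z. \<mu> z + (-t) * c z)"
  define y where "y = lincomb cy S"
  have sy: "sum cy S = 1" unfolding cy_def using mu c by (simp add: sum.distrib sum_subtractf sum_distrib_left[symmetric])
  have ya: "y \<in> aff_hull S" unfolding aff_hull_def y_def using sy by blast
  have yp: "(\<lambda>i. y i - p i) = (\<lambda>i. (-t) * g a i)"
    unfolding y_def cy_def lincomb_lin p c(2) by simp
  have "sqdist N y p = t^2 * q"
    unfolding sqdist_def yp q_def ip_scale1 ip_scale2 by (simp add: power2_eq_square)
  also have "\<dots> = t * (t * q)" by (simp add: power2_eq_square)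
  also have "\<dots> < e"
  proof -
    have "t * (t * q) < 1 * (t * q)" using t1 tpos qpos by (intro mult_strict_right_mono) auto
    then show ?thesis using tq by simp
  qed
  finally have "y \<in> conv_hull S" using e ya by blast
  then obtain c' where c': "\<forall>z\<in>S. c' z \<ge> 0" "sum c' S = 1" "y = lincomb c' S"
    unfolding conv_hull_def by blast
  have "sum (\<lambda>z. c' z - cy z) S = 0" using c'(2) sy by (simp add: sum_subtractf)
  moreover have "lincomb (\<lambda>z. c' z - cy z) S = (\<lambda>i. 0)"
    unfolding lincomb_diff using c'(3) y_def by simp
  ultimately have "c' a - cy a = 0" using ai aS unfolding aff_indep_def by blast
  then have "c' a = \<mu> a - t * q" unfolding cy_def using ca by simp
  then have "c' a < 0" using ma mult_pos_pos[OF tpos qpos] by linarith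
  then show False using c'(1) aS by force
qed

lemma proj_exists:
  assumes ac: "acute_simplex n (insert v S)" and vS: "v \<notin> S" and ne: "S \<noteq> {}" and fin: "finite S"
  shows "\<exists>\<mu> p. sum \<mu> S = 1 \<and> p = lincomb \<mu> S \<and> (\<forall>a\<in>S. \<forall>b\<in>S. ip n (\<lambda>i. v i - p i) (\<lambda>i. a i - b i) = 0)"
proof -
  obtain g' where g': "gfam n (insert v S) g'" using acute_gfam[OF ac] by blast
  have finS': "finite (insert v S)" using fin by simp
  have vS': "v \<in> insert v S" by simp
  obtain c where c: "sum c (insert v S) = 0" "g' v = lincomb c (insert v S)" using gfam_lc[OF g' vS'] by blast
  define q where "q = ip n (g' v) (g' v)"
  have cv: "c v = q" using gfam_ip_coeff[OF finS' g' vS' c(1)] c(2) q_def by simp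
  obtain a where aS: "a \<in> S" using ne by blast
  have "ip n (g' v) (\<lambda>i. v i - a i) = 1" using g' aS vS unfolding gfam_def by auto
  then have q0: "q \<noteq> 0" using ip_zero_left[of n "g' v"] q_def by auto
  define \<mu> where "\<mu> = (\<lambda>z. - c z / q)"
  define p where "p = lincomb \<mu> S"
  have "sum c S = - q" using c(1) fin vS cv by simp
  then have mu: "sum \<mu> S = 1" unfolding \<mu>_def using q0 by (simp add: sum_divide_distrib[symmetric] sum_negf)
  have vp: "(\<lambda>i. v i - p i) = (\<lambda>i. (1/q) * g' v i)"
  proof
    fix i
    have "g' v i = q * v i + lincomb c S i" using c(2) lincomb_insert[OF fin vS, of c] cv by simp
    moreover have "p i = - lincomb c S i / q" unfolding p_def \<mu>_def lincomb_def
      by (simp add: sum_divide_distrib sum_negf)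
    ultimately show "v i - p i = (1/q) * g' v i" using q0 by (simp add: field_simps)
  qed
  have "\<forall>a\<in>S. \<forall>b\<in>S. ip n (\<lambda>i. v i - p i) (\<lambda>i. a i - b i) = 0"
  proof (intro ballI)
    fix a b assume ab: "a \<in> S" "b \<in> S"
    have "ip n (g' v) (\<lambda>i. a i - b i) = 0" using g' ab vS unfolding gfam_def by auto
    then show "ip n (\<lambda>i. v i - p i) (\<lambda>i. a i - b i) = 0" unfolding vp ip_scale1 by simp
  qed
  then show ?thesis using mu p_def by blast
qed



lemma Qc_lift:
  assumes "gfam n S g" "S \<subseteq> cube01 n" "n \<le> N"
  shows "Qc N S g \<mu> s = Qc n S g \<mu> s"
proof -
  have "ip N (g a) (g b) = ip n (g a) (g b)" if "a \<in> S" for a b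
  proof -
    have "insp S (g a)" using assms(1) that unfolding gfam_def by blast
    then have "\<forall>i\<ge>n. g a i = 0" using insp_vanish assms(2) by blast
    then show ?thesis using ip_lift assms(3) by blast
  qed
  then show ?thesis unfolding Qc_def by simp
qed

lemma stack_equiv:
  assumes ac: "acute_simplex n S" and gf: "gfam n S g" and v: "v \<in> cube01 n"
    and mu: "sum \<mu> S = 1" and p: "p = lincomb \<mu> S"
    and orth: "\<forall>a\<in>S. \<forall>b\<in>S. ip n (\<lambda>i. v i - p i) (\<lambda>i. a i - b i) = 0"
    and w: "w \<in> cube01 m"
  shows "stack n v w \<in> acute_ext (n+m) S \<longleftrightarrow> Qc n S g \<mu> (ip n (\<lambda>i. v i - p i) (\<lambda>i. v i - p i) + ip m w w)"
proof -
  have fin: "finite S" and ne: "S \<noteq> {}" and subn: "S \<subseteq> cube01 n" and ai: "aff_indep S"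
    using ac unfolding acute_simplex_def by auto
  define u where "u = stack n v w"
  have nN: "n \<le> n + m" by simp
  have subN: "S \<subseteq> cube01 (n+m)" using subn cube_mono[OF nN] by blast
  have gfN: "gfam (n+m) S g" using gfam_lift[OF subn nN gf] .
  have uN: "u \<in> cube01 (n+m)" using stack_cube[OF v w] u_def by simp
  have pv: "\<forall>i\<ge>n. p i = 0" using lincomb_vanish[OF subn] p by simp
  have orthN: "\<forall>a\<in>S. \<forall>b\<in>S. ip (n+m) (\<lambda>i. u i - p i) (\<lambda>i. a i - b i) = 0"
  proof (intro ballI)
    fix a b assume ab: "a \<in> S" "b \<in> S"
    have "a \<in> cube01 n" "b \<in> cube01 n" using ab subn by auto
    then have "\<forall>i\<ge>n. a i - b i = 0" unfolding cube01_def by simp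
    then have "ip (n+m) (\<lambda>i. u i - p i) (\<lambda>i. a i - b i) = ip n (\<lambda>i. u i - p i) (\<lambda>i. a i - b i)"
      by (rule ip_lift2[OF _ nN])
    also have "\<dots> = ip n (\<lambda>i. v i - p i) (\<lambda>i. a i - b i)"
      unfolding u_def by (intro ip_cong) (auto simp: stack_below)
    finally show "ip (n+m) (\<lambda>i. u i - p i) (\<lambda>i. a i - b i) = 0" using orth ab by simp
  qed
  have sN: "ip (n+m) (\<lambda>i. u i - p i) (\<lambda>i. u i - p i) = ip n (\<lambda>i. v i - p i) (\<lambda>i. v i - p i) + ip m w w"
    unfolding u_def using ip_stack pv by blast
  have "(u \<notin> S \<and> acute_simplex (n+m) (insert u S)) \<longleftrightarrow> Qc (n+m) S g \<mu> (ip (n+m) (\<lambda>i. u i - p i) (\<lambda>i. u i - p i))"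
    by (rule core[OF fin ne subN ai gfN mu p uN orthN])
  then show ?thesis unfolding sN Qc_lift[OF gf subn nN] acute_ext_def u_def[symmetric] using uN by blast
qed

lemma Qc_mono:
  assumes "Qc n S g \<mu> s" "s \<le> s'"
  shows "Qc n S g \<mu> s'"
proof -
  have spos: "s > 0" and mpos: "\<forall>a\<in>S. \<mu> a > 0" using assms(1) unfolding Qc_def by auto
  have "\<mu> a * \<mu> b / s' \<le> \<mu> a * \<mu> b / s" if "a \<in> S" "b \<in> S" for a b
    using mpos that spos assms(2) by (intro divide_left_mono) (auto intro: mult_nonneg_nonneg less_imp_le)
  then show ?thesis using assms spos unfolding Qc_def by (smt (verit, best))
qed

lemma Qc_large:
  assumes fin: "finite S" and ob: "obtuse n S g" and mpos: "\<forall>a\<in>S. \<mu> a > 0" and s0: "s0 \<ge> 0"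
  shows "\<exists>k::nat. Qc n S g \<mu> (s0 + real k)"
proof -
  define P where "P = {(a,b). a \<in> S \<and> b \<in> S \<and> a \<noteq> b}"
  have "P \<subseteq> S \<times> S" unfolding P_def by auto
  then have finP: "finite P" using finite_subset fin by blast
  define t where "t = (\<lambda>(a,b). \<mu> a * \<mu> b / (- ip n (g a) (g b)))"
  have tnn: "t x \<ge> 0" if "x \<in> P" for x
  proof -
    obtain a b where x: "x = (a,b)" "a \<in> S" "b \<in> S" "a \<noteq> b" using \<open>x \<in> P\<close> unfolding P_def by blast
    have "0 < \<mu> a * \<mu> b" using mpos x by simp
    moreover have "0 < - ip n (g a) (g b)" using obtuseD[OF ob x(2-4)] by simp
    ultimately have "0 < \<mu> a * \<mu> b / (- ip n (g a) (g b))" by (rule divide_pos_pos)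
    then show ?thesis unfolding t_def x by simp
  qed
  define K where "K = 1 + sum t P"
  define k where "k = nat \<lceil>K\<rceil>"
  define s where "s = s0 + real k"
  have sK: "s \<ge> K" unfolding s_def k_def using s0 by linarith
  have K1: "K \<ge> 1" unfolding K_def using sum_nonneg[of P t] tnn by simp
  have spos: "s > 0" using sK K1 by simp
  have "ip n (g a) (g b) + \<mu> a * \<mu> b / s < 0" if ab: "a \<in> S" "b \<in> S" "a \<noteq> b" for a b
  proof -
    have G: "ip n (g a) (g b) < 0" using obtuseD[OF ob ab] .
    have "(a,b) \<in> P" unfolding P_def using ab by simp
    then have "t (a,b) \<le> sum t P" using member_le_sum[of "(a,b)" P t] tnn finP by simp
    define c where "c = - ip n (g a) (g b)"
    have cpos: "c > 0" using G c_def by simp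
    have "\<mu> a * \<mu> b / c < s" using sK \<open>t (a,b) \<le> sum t P\<close> unfolding K_def t_def c_def by simp
    then have "\<mu> a * \<mu> b < s * c" by (simp add: pos_divide_less_eq[OF cpos])
    then have "\<mu> a * \<mu> b / s < c" by (simp add: pos_divide_less_eq[OF spos] mult.commute)
    then show ?thesis unfolding c_def by simp
  qed
  then have "Qc n S g \<mu> s" unfolding Qc_def using spos mpos by blast
  then show ?thesis unfolding s_def by blast
qed

lemma ip_nat_aux: "(\<forall>i<m. w i = 0 \<or> w i = 1) \<Longrightarrow> \<exists>k::nat. (\<Sum>i<m. w i * w i) = real k"
  for w :: "nat \<Rightarrow> real" and m :: nat
proof (induction m)
  case 0 then show ?case by simp
next
  case (Suc m)
  then obtain k where k: "(\<Sum>i<m. w i * w i) = real k" by auto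
  have "w m = 0 \<or> w m = 1" using Suc.prems by simp
  then show ?case
  proof
    assume "w m = 0" then show ?thesis using k by (intro exI[of _ k]) simp
  next
    assume "w m = 1" then show ?thesis using k by (intro exI[of _ "k+1"]) simp
  qed
qed

lemma ip_nat: "w \<in> cube01 m \<Longrightarrow> \<exists>k::nat. ip m w w = real k"
  unfolding ip_def cube01_def using ip_nat_aux by blast



theorem theorem5p11:
  fixes n m :: nat and S :: "(nat \<Rightarrow> real) set"
  assumes "acute_simplex n S" and "card S \<le> n" and "m \<ge> 1"
  shows "cand_ext (n + m) S = {stack n v w | v w. v \<in> cand_ext n S \<and> w \<in> cube01 m}
    \<and> acute_ext (n + m) S \<supseteq> {stack n v w | v w. v \<in> acute_ext n S \<and> w \<in> cube01 m}
    \<and> (\<forall>v\<in>cand_ext n S. \<exists>l::int. \<forall>m'\<ge>1. \<forall>w\<in>cube01 m'.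
           (ip m' w w \<ge> of_int l \<longleftrightarrow> stack n v w \<in> acute_ext (n + m') S))"
proof -
  note ac = assms(1)
  have fin: "finite S" and ne: "S \<noteq> {}" and subn: "S \<subseteq> cube01 n" and ai: "aff_indep S"
    using ac unfolding acute_simplex_def by auto
  obtain g where gf: "gfam n S g" and ob: "obtuse n S g" using acute_gfam[OF ac] by blast
  have P1: "cand_ext (n + m) S = {stack n v w | v w. v \<in> cand_ext n S \<and> w \<in> cube01 m}"
    by (rule part1[OF subn])
  have P2: "acute_ext (n + m) S \<supseteq> {stack n v w | v w. v \<in> acute_ext n S \<and> w \<in> cube01 m}"
  proof
    fix x assume "x \<in> {stack n v w | v w. v \<in> acute_ext n S \<and> w \<in> cube01 m}"
    then obtain v w where x: "x = stack n v w" and v: "v \<in> acute_ext n S" and w: "w \<in> cube01 m" by blast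
    have vc: "v \<in> cube01 n" and vS: "v \<notin> S" and acv: "acute_simplex n (insert v S)"
      using v unfolding acute_ext_def by auto
    obtain \<mu> p where mu: "sum \<mu> S = 1" and p: "p = lincomb \<mu> S"
      and orth: "\<forall>a\<in>S. \<forall>b\<in>S. ip n (\<lambda>i. v i - p i) (\<lambda>i. a i - b i) = 0"
      using proj_exists[OF acv vS ne fin] by blast
    define w0 :: "nat \<Rightarrow> real" where "w0 = (\<lambda>_. 0)"
    have w0c: "w0 \<in> cube01 0" unfolding w0_def cube01_def by simp
    have sv: "stack n v w0 = v"
    proof
      fix i show "stack n v w0 i = v i" using vc unfolding stack_def w0_def cube01_def by auto
    qed
    have "Qc n S g \<mu> (ip n (\<lambda>i. v i - p i) (\<lambda>i. v i - p i) + ip 0 w0 w0)"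
      using stack_equiv[OF ac gf vc mu p orth w0c] sv v by simp
    then have Q0: "Qc n S g \<mu> (ip n (\<lambda>i. v i - p i) (\<lambda>i. v i - p i))" by (simp add: ip_def)
    have "Qc n S g \<mu> (ip n (\<lambda>i. v i - p i) (\<lambda>i. v i - p i) + ip m w w)"
      using Qc_mono[OF Q0] ip_nonneg[of m w] by simp
    then show "x \<in> acute_ext (n + m) S" using stack_equiv[OF ac gf vc mu p orth w] x by simp
  qed
  have P3: "\<forall>v\<in>cand_ext n S. \<exists>l::int. \<forall>m'\<ge>1. \<forall>w\<in>cube01 m'.
           (ip m' w w \<ge> of_int l \<longleftrightarrow> stack n v w \<in> acute_ext (n + m') S)"
  proof
    fix v assume v: "v \<in> cand_ext n S"
    then obtain p where vc: "v \<in> cube01 n" and pr: "is_proj_aff n S v p" and rel: "p \<in> relint_conv n S"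
      unfolding cand_ext_def by blast
    obtain \<mu> where mu: "sum \<mu> S = 1" and p: "p = lincomb \<mu> S"
      using pr unfolding is_proj_aff_def aff_hull_def by blast
    have orth: "\<forall>a\<in>S. \<forall>b\<in>S. ip n (\<lambda>i. v i - p i) (\<lambda>i. a i - b i) = 0"
      using proj_orth[OF pr fin] by blast
    have mpos: "\<forall>a\<in>S. \<mu> a > 0" by (rule relint_pos[OF fin ai gf mu p rel])
    define s0 where "s0 = ip n (\<lambda>i. v i - p i) (\<lambda>i. v i - p i)"
    have s0nn: "s0 \<ge> 0" unfolding s0_def by (rule ip_nonneg)
    have ex: "\<exists>k::nat. Qc n S g \<mu> (s0 + real k)" by (rule Qc_large[OF fin ob mpos s0nn])
    define L where "L = (LEAST k::nat. Qc n S g \<mu> (s0 + real k))"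
    have QL: "Qc n S g \<mu> (s0 + real L)" unfolding L_def using ex by (rule LeastI_ex)
    show "\<exists>l::int. \<forall>m'\<ge>1. \<forall>w\<in>cube01 m'.
           (ip m' w w \<ge> of_int l \<longleftrightarrow> stack n v w \<in> acute_ext (n + m') S)"
    proof (intro exI[of _ "int L"] allI impI ballI)
      fix m' :: nat and w assume w: "w \<in> cube01 m'"
      obtain k where k: "ip m' w w = real k" using ip_nat[OF w] by blast
      have eq: "stack n v w \<in> acute_ext (n + m') S \<longleftrightarrow> Qc n S g \<mu> (s0 + real k)"
        using stack_equiv[OF ac gf vc mu p orth w] k unfolding s0_def by simp
      show "(ip m' w w \<ge> of_int (int L) \<longleftrightarrow> stack n v w \<in> acute_ext (n + m') S)"
      proof
        assume "ip m' w w \<ge> of_int (int L)"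
        then have "real L \<le> real k" using k by simp
        then have "Qc n S g \<mu> (s0 + real k)" using Qc_mono[OF QL] by simp
        then show "stack n v w \<in> acute_ext (n + m') S" using eq by simp
      next
        assume "stack n v w \<in> acute_ext (n + m') S"
        then have "Qc n S g \<mu> (s0 + real k)" using eq by simp
        then have "L \<le> k" unfolding L_def by (rule Least_le)
        then show "ip m' w w \<ge> of_int (int L)" using k by simp
      qed
    qed
  qed
  show ?thesis using P1 P2 P3 by blast
qed

end
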